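(* Let $X$ be a non-degenerate random variable with $E|X|<\infty$ whose cumulative distribution function $F$ is differentiable with density $f$, and let $\mu=EX$. Then $$\lim_{\alpha\to 1/2-} s_2(\alpha) = 2F(\mu)-1 .$$
   Context: For a random variable $X$ with $E|X|<\infty$ and $\tau\in(0,1)$, the $\tau$-expectile $e_X(\tau)$ is the unique real number $t$ satisfying $\tau\, E(X-t)_+ = (1-\tau)\, E(X-t)_-$, where $x_+=\max\{x,0\}$ and $x_-=\max\{-x,0\}$; $e_X(1/2)=\mu=EX$. For $\alpha\in(0,1/2)$ the normalized expectile skewness is $$s_2(\alpha) = \frac{1}{1-2\alpha}\cdot\frac{e_X(1-\alpha)+e_X(\alpha)-2\mu}{e_X(1-\alpha)-e_X(\alpha)}.$$ *)

theory Defs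
  imports "HOL-Probability.Probability"
begin

definition expectile :: "'a measure \<Rightarrow> ('a \<Rightarrow> real) \<Rightarrow> real \<Rightarrow> real" where
  "expectile M X \<tau> =
     (THE t. \<tau> * (\<integral>x. max (X x - t) 0 \<partial>M) = (1 - \<tau>) * (\<integral>x. max (t - X x) 0 \<partial>M))"

definition expectile_skew2 :: "'a measure \<Rightarrow> ('a \<Rightarrow> real) \<Rightarrow> real \<Rightarrow> real" where
  "expectile_skew2 M X \<alpha> =
     (1 / (1 - 2 * \<alpha>)) *
     ((expectile M X (1 - \<alpha>) + expectile M X \<alpha> - 2 * (\<integral>x. X x \<partial>M)) /
      (expectile M X (1 - \<alpha>) - expectile M X \<alpha>))"

end

theory Submission
  imports Defs
begin

context prob_space
begin

definition SS :: "('a \<Rightarrow> real) \<Rightarrow> real \<Rightarrow> real" where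
  "SS X t = (\<integral>x. \<bar>X x - t\<bar> \<partial>M)"

lemma SS_int:
  fixes X :: "'a \<Rightarrow> real"
  assumes "integrable M X" shows "integrable M (\<lambda>x. \<bar>X x - t\<bar>)"
  by (rule integrable_abs, rule Bochner_Integration.integrable_diff[OF assms]) simp

lemma PN_eqs:
  assumes "integrable M X"
  shows "(\<integral>x. max (X x - t) 0 \<partial>M) - (\<integral>x. max (t - X x) 0 \<partial>M) = (\<integral>x. X x \<partial>M) - t"
    and "(\<integral>x. max (X x - t) 0 \<partial>M) + (\<integral>x. max (t - X x) 0 \<partial>M) = SS X t"
proof -
  have i1: "integrable M (\<lambda>x. max (X x - t) 0)" using assms by auto
  have i2: "integrable M (\<lambda>x. max (t - X x) 0)" using assms by auto
  have "(\<integral>x. max (X x - t) 0 \<partial>M) - (\<integral>x. max (t - X x) 0 \<partial>M)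
     = (\<integral>x. max (X x - t) 0 - max (t - X x) 0 \<partial>M)"
    using i1 i2 by simp
  also have "\<dots> = (\<integral>x. X x - t \<partial>M)"
    by (rule Bochner_Integration.integral_cong) auto
  also have "\<dots> = (\<integral>x. X x \<partial>M) - t" using assms by (simp add: prob_space)
  finally show "(\<integral>x. max (X x - t) 0 \<partial>M) - (\<integral>x. max (t - X x) 0 \<partial>M) = (\<integral>x. X x \<partial>M) - t" .
  have "(\<integral>x. max (X x - t) 0 \<partial>M) + (\<integral>x. max (t - X x) 0 \<partial>M)
     = (\<integral>x. max (X x - t) 0 + max (t - X x) 0 \<partial>M)"
    using i1 i2 by simp
  also have "\<dots> = SS X t" unfolding SS_def
    by (rule Bochner_Integration.integral_cong) auto
  finally show "(\<integral>x. max (X x - t) 0 \<partial>M) + (\<integral>x. max (t - X x) 0 \<partial>M) = SS X t" .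
qed

lemma eq_iff:
  assumes "integrable M X"
  shows "(\<tau> * (\<integral>x. max (X x - t) 0 \<partial>M) = (1 - \<tau>) * (\<integral>x. max (t - X x) 0 \<partial>M))
     \<longleftrightarrow> (2*\<tau> - 1) * SS X t = t - (\<integral>x. X x \<partial>M)"
proof -
  define P where "P = (\<integral>x. max (X x - t) 0 \<partial>M)"
  define N where "N = (\<integral>x. max (t - X x) 0 \<partial>M)"
  define mu where "mu = (\<integral>x. X x \<partial>M)"
  have h1: "SS X t = P + N" and h2: "mu = P - N + t"
    using PN_eqs[OF assms, of t] unfolding P_def N_def mu_def by auto
  have "(2*\<tau>-1)*SS X t - (t-mu) = 2*(\<tau>*P - (1-\<tau>)*N)"
    unfolding h1 h2 by (simp add: algebra_simps)
  then show ?thesis unfolding P_def[symmetric] N_def[symmetric] mu_def[symmetric] by auto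
qed

lemma SS_lip:
  assumes "integrable M X"
  shows "SS X a \<le> SS X b + \<bar>a - b\<bar>"
proof -
  have "SS X a \<le> (\<integral>x. \<bar>X x - b\<bar> + \<bar>a - b\<bar> \<partial>M)" unfolding SS_def
    by (rule integral_mono) (use assms in auto)
  also have "\<dots> = SS X b + \<bar>a - b\<bar>" unfolding SS_def using assms by (simp add: prob_space)
  finally show ?thesis .
qed

lemma SS_nonneg: "SS X t \<ge> 0" unfolding SS_def by simp

lemma SS_pos:
  assumes "integrable M X" "\<not> (\<exists>c. AE x in M. X x = c)"
  shows "SS X t > 0"
proof (rule ccontr)
  assume "\<not> SS X t > 0"
  then have "SS X t = 0" using SS_nonneg[of X t] by simp
  then have "AE x in M. \<bar>X x - t\<bar> = 0" unfolding SS_def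
    using integral_nonneg_eq_0_iff_AE[OF SS_int[OF assms(1)]] by simp
  then have "AE x in M. X x = t" by simp
  then show False using assms(2) by blast
qed

lemma SS_cont:
  assumes "integrable M X"
  shows "isCont (SS X) t"
proof -
  have "((\<lambda>y. SS X y - SS X t) \<longlongrightarrow> 0) (at t)"
  proof (rule Lim_null_comparison)
    show "\<forall>\<^sub>F y in at t. norm (SS X y - SS X t) \<le> \<bar>y - t\<bar>"
    proof (intro always_eventually allI)
      fix y
      have "SS X y \<le> SS X t + \<bar>y - t\<bar>" by (rule SS_lip[OF assms])
      moreover have "SS X t \<le> SS X y + \<bar>t - y\<bar>" by (rule SS_lip[OF assms])
      ultimately show "norm (SS X y - SS X t) \<le> \<bar>y - t\<bar>" by (simp add: abs_le_iff abs_minus_commute)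
    qed
    have "((\<lambda>y. \<bar>y - t\<bar>) \<longlongrightarrow> \<bar>t - t\<bar>) (at t)" by (intro tendsto_intros)
    then show "((\<lambda>y. \<bar>y - t\<bar>) \<longlongrightarrow> 0) (at t)" by simp
  qed
  then show ?thesis unfolding isCont_def using LIM_zero_cancel by blast
qed

lemma ind_int:
  fixes X :: "'a \<Rightarrow> real"
  assumes "X \<in> borel_measurable M"
  shows "(\<integral>x. 2*(b-a)*indicator {x\<in>space M. X x \<le> c} x - (b-a) \<partial>M)
     = (b-a)*(2*measure M {x\<in>space M. X x \<le> c} - 1)"
proof -
  have ms: "{x\<in>space M. X x \<le> c} \<in> sets M" using assms by measurable
  have i: "integrable M (\<lambda>x. 2*(b-a)*indicator {x\<in>space M. X x \<le> c} x :: real)"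
    using ms by (intro integrable_mult_right integrable_real_indicator) (auto simp: less_top[symmetric] emeasure_finite)
  have "(\<integral>x. 2*(b-a)*indicator {x\<in>space M. X x \<le> c} x - (b-a) \<partial>M)
     = (\<integral>x. 2*(b-a)*indicator {x\<in>space M. X x \<le> c} x \<partial>M) - (b-a)"
    using i by (simp add: prob_space)
  also have "\<dots> = 2*(b-a)*measure M {x\<in>space M. X x \<le> c} - (b-a)"
    by (simp add: Int_absorb2)
  finally show ?thesis by (simp add: algebra_simps)
qed

lemma SS_bounds:
  fixes X :: "'a \<Rightarrow> real"
  assumes "X \<in> borel_measurable M" "integrable M X" "a \<le> b"
  shows "(b-a)*(2*measure M {x\<in>space M. X x \<le> a} - 1) \<le> SS X b - SS X a"
    and "SS X b - SS X a \<le> (b-a)*(2*measure M {x\<in>space M. X x \<le> b} - 1)"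
proof -
  have ms: "\<And>c. {x\<in>space M. X x \<le> c} \<in> sets M" using assms by measurable
  have ic: "\<And>c. integrable M (\<lambda>x. 2*(b-a)*indicator {x\<in>space M. X x \<le> c} x - (b-a) :: real)"
    using ms by (intro Bochner_Integration.integrable_diff integrable_mult_right integrable_real_indicator) (auto simp: less_top[symmetric] emeasure_finite)
  have iS: "integrable M (\<lambda>x. \<bar>X x - b\<bar> - \<bar>X x - a\<bar>)"
    using SS_int[OF assms(2)] by (intro Bochner_Integration.integrable_diff) auto
  have eS: "SS X b - SS X a = (\<integral>x. \<bar>X x - b\<bar> - \<bar>X x - a\<bar> \<partial>M)"
    unfolding SS_def using SS_int[OF assms(2)] by simp
  have "(\<integral>x. 2*(b-a)*indicator {x\<in>space M. X x \<le> a} x - (b-a) \<partial>M) \<le> (\<integral>x. \<bar>X x - b\<bar> - \<bar>X x - a\<bar> \<partial>M)"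
  proof (rule integral_mono[OF ic iS])
    fix x assume "x \<in> space M"
    show "2*(b-a)*indicator {x\<in>space M. X x \<le> a} x - (b-a) \<le> \<bar>X x - b\<bar> - \<bar>X x - a\<bar>"
      using \<open>x \<in> space M\<close> assms(3) by (cases "X x \<le> a") (auto simp: indicator_def abs_if)
  qed
  then show "(b-a)*(2*measure M {x\<in>space M. X x \<le> a} - 1) \<le> SS X b - SS X a"
    using ind_int[OF assms(1)] eS by simp
  have "(\<integral>x. \<bar>X x - b\<bar> - \<bar>X x - a\<bar> \<partial>M) \<le> (\<integral>x. 2*(b-a)*indicator {x\<in>space M. X x \<le> b} x - (b-a) \<partial>M)"
  proof (rule integral_mono[OF iS ic])
    fix x assume "x \<in> space M"
    show "\<bar>X x - b\<bar> - \<bar>X x - a\<bar> \<le> 2*(b-a)*indicator {x\<in>space M. X x \<le> b} x - (b-a)"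
      using \<open>x \<in> space M\<close> assms(3) by (cases "X x \<le> b") (auto simp: indicator_def abs_if)
  qed
  then show "SS X b - SS X a \<le> (b-a)*(2*measure M {x\<in>space M. X x \<le> b} - 1)"
    using ind_int[OF assms(1)] eS by simp
qed

lemma root_unique:
  fixes X :: "'a \<Rightarrow> real"
  assumes "integrable M X" "\<bar>c\<bar> < 1"
    and "c * SS X s = s - (\<integral>x. X x \<partial>M)" "c * SS X t = t - (\<integral>x. X x \<partial>M)"
  shows "s = t"
proof -
  have "s - t = c * (SS X s - SS X t)" using assms(3,4) by (simp add: algebra_simps)
  then have "\<bar>s - t\<bar> = \<bar>c\<bar> * \<bar>SS X s - SS X t\<bar>" by (simp add: abs_mult)
  also have "\<dots> \<le> \<bar>c\<bar> * \<bar>s - t\<bar>"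
  proof (rule mult_left_mono)
    show "\<bar>SS X s - SS X t\<bar> \<le> \<bar>s - t\<bar>"
      using SS_lip[OF assms(1), of s t] SS_lip[OF assms(1), of t s] by (auto simp: abs_le_iff abs_minus_commute)
  qed simp
  finally have "(1 - \<bar>c\<bar>) * \<bar>s - t\<bar> \<le> 0" by (simp add: algebra_simps)
  then have "\<bar>s - t\<bar> \<le> 0" using assms(2) by (simp add: mult_le_0_iff)
  then show ?thesis by simp
qed

lemma root_exists:
  fixes X :: "'a \<Rightarrow> real"
  assumes "integrable M X" "\<bar>c\<bar> < 1"
  shows "\<exists>t. c * SS X t = t - (\<integral>x. X x \<partial>M)"
proof -
  define mu where "mu = (\<integral>x. X x \<partial>M)"
  define K where "K = SS X mu / (1 - \<bar>c\<bar>)"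
  have K0: "K \<ge> 0" unfolding K_def using assms(2) SS_nonneg[of X mu] by simp
  have K1: "K * (1 - \<bar>c\<bar>) = SS X mu" unfolding K_def using assms(2) by simp
  define phi where "phi t = t - mu - c * SS X t" for t
  have cphi: "continuous_on {mu - K .. mu + K} phi" unfolding phi_def
    using SS_cont[OF assms(1)] by (intro continuous_at_imp_continuous_on ballI) (auto intro!: continuous_intros)
  have b1: "\<bar>c * SS X (mu + K)\<bar> \<le> \<bar>c\<bar> * (SS X mu + K)"
    using SS_lip[OF assms(1), of "mu + K" mu] SS_nonneg[of X "mu+K"] K0
    by (auto simp: abs_mult intro!: mult_left_mono)
  have b2: "\<bar>c * SS X (mu - K)\<bar> \<le> \<bar>c\<bar> * (SS X mu + K)"
    using SS_lip[OF assms(1), of "mu - K" mu] SS_nonneg[of X "mu-K"] K0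
    by (auto simp: abs_mult intro!: mult_left_mono)
  have e: "\<bar>c\<bar> * (SS X mu + K) \<le> K"
  proof -
    have "\<bar>c\<bar> * (SS X mu + K) = \<bar>c\<bar> * SS X mu + \<bar>c\<bar>*K" by (rule distrib_left)
    also have "\<dots> \<le> SS X mu + \<bar>c\<bar>*K" using assms(2) SS_nonneg[of X mu]
      by (simp add: mult_left_le_one_le)
    also have "\<dots> = K" using K1 by (simp add: algebra_simps)
    finally show ?thesis .
  qed
  have "phi (mu - K) \<le> 0" "0 \<le> phi (mu + K)" unfolding phi_def using b1 b2 e by (auto simp: abs_le_iff)
  from IVT'[of phi "mu - K" 0 "mu + K", OF this _ cphi] K0
  obtain t where "phi t = 0" by auto
  then show ?thesis unfolding phi_def mu_def by (intro exI[of _ t]) simp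
qed

lemma expectile_eq:
  fixes X :: "'a \<Rightarrow> real"
  assumes "integrable M X" "0 < \<tau>" "\<tau> < 1"
  shows "(2*\<tau>-1) * SS X (expectile M X \<tau>) = expectile M X \<tau> - (\<integral>x. X x \<partial>M)"
proof -
  have c: "\<bar>2*\<tau>-1\<bar> < 1" using assms(2,3) by auto
  obtain t where t: "(2*\<tau>-1) * SS X t = t - (\<integral>x. X x \<partial>M)" using root_exists[OF assms(1) c] by blast
  have "expectile M X \<tau> = t" unfolding expectile_def
  proof (rule the_equality)
    show "\<tau> * (\<integral>x. max (X x - t) 0 \<partial>M) = (1 - \<tau>) * (\<integral>x. max (t - X x) 0 \<partial>M)"
      using eq_iff[OF assms(1)] t by blast
    fix s assume "\<tau> * (\<integral>x. max (X x - s) 0 \<partial>M) = (1 - \<tau>) * (\<integral>x. max (s - X x) 0 \<partial>M)"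
    then have "(2*\<tau>-1) * SS X s = s - (\<integral>x. X x \<partial>M)" using eq_iff[OF assms(1)] by blast
    then show "s = t" using root_unique[OF assms(1) c _ t] by blast
  qed
  then show ?thesis using t by simp
qed

end

theorem mainTheorem3:
  fixes M :: "'a measure" and X :: "'a \<Rightarrow> real" and F f :: "real \<Rightarrow> real"
  assumes "prob_space M"
    and "X \<in> borel_measurable M"
    and "integrable M X"
    and "\<not> (\<exists>c. AE x in M. X x = c)"
    and "\<And>t. F t = measure M {x \<in> space M. X x \<le> t}"
    and "\<And>t. (F has_real_derivative f t) (at t)"
  shows "((\<lambda>\<alpha>. expectile_skew2 M X \<alpha>) \<longlongrightarrow> 2 * F (\<integral>x. X x \<partial>M) - 1) (at_left (1/2))"
proof -
  interpret prob_space M by fact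
  define mu where "mu = (\<integral>x. X x \<partial>M)"
  define G where "G t = 2 * F t - 1" for t
  have FG: "2*measure M {x\<in>space M. X x \<le> t} - 1 = G t" for t using assms(5) G_def by simp
  have ev: "\<forall>\<^sub>F \<alpha> in at_left (1/2). \<alpha> \<in> {0<..<1/2::real}" by (rule eventually_at_left_real) simp
  have key: "G (expectile M X \<alpha>) \<le> expectile_skew2 M X \<alpha> \<and> expectile_skew2 M X \<alpha> \<le> G (expectile M X (1-\<alpha>))
     \<and> \<bar>expectile M X \<alpha> - mu\<bar> \<le> (1-2*\<alpha>)*SS X mu/(2*\<alpha>)
     \<and> \<bar>expectile M X (1-\<alpha>) - mu\<bar> \<le> (1-2*\<alpha>)*SS X mu/(2*\<alpha>)"
    if a: "\<alpha> \<in> {0<..<1/2::real}" for \<alpha>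
  proof -
    define ep where "ep = expectile M X (1-\<alpha>)"
    define em where "em = expectile M X \<alpha>"
    have a0: "0 < \<alpha>" "\<alpha> < 1/2" using a by auto
    have hp: "(1-2*\<alpha>) * SS X ep = ep - mu"
      using expectile_eq[OF assms(3), of "1-\<alpha>"] a0 unfolding ep_def mu_def by (simp add: algebra_simps)
    have hm: "-(1-2*\<alpha>) * SS X em = em - mu"
      using expectile_eq[OF assms(3), of "\<alpha>"] a0 unfolding em_def mu_def by (simp add: algebra_simps)
    have Sp: "SS X ep > 0" and Sm: "SS X em > 0" using SS_pos[OF assms(3,4)] by auto
    have c0: "1 - 2*\<alpha> > 0" using a0 by simp
    have d: "ep - em = (1-2*\<alpha>)*(SS X ep + SS X em)" using hp hm by (simp add: algebra_simps)
    have dpos: "ep - em > 0" unfolding d using c0 Sp Sm by simp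
    have sk: "expectile_skew2 M X \<alpha> = (SS X ep - SS X em) / (ep - em)"
    proof -
      have N: "ep + em - 2 * mu = (1-2*\<alpha>)*(SS X ep - SS X em)" using hp hm by (simp add: algebra_simps)
      have "expectile_skew2 M X \<alpha> = (1 / (1-2*\<alpha>)) * (((1-2*\<alpha>)*(SS X ep - SS X em)) / (ep - em))"
        unfolding expectile_skew2_def ep_def[symmetric] em_def[symmetric] mu_def[symmetric] N ..
      also have "\<dots> = (SS X ep - SS X em) / (ep - em)" using c0 by simp
      finally show ?thesis .
    qed
    have B1: "(ep-em)*G em \<le> SS X ep - SS X em" and B2: "SS X ep - SS X em \<le> (ep-em) * G ep"
      using SS_bounds[OF assms(2,3), of em ep] dpos FG by auto
    have g1: "G em \<le> expectile_skew2 M X \<alpha>" unfolding sk using B1 dpos by (simp add: pos_le_divide_eq mult.commute)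
    have g2: "expectile_skew2 M X \<alpha> \<le> G ep" unfolding sk using B2 dpos by (simp add: pos_divide_le_eq mult.commute)
    have bnd: "\<bar>t - mu\<bar> \<le> (1-2*\<alpha>)*SS X mu/(2*\<alpha>)" if ht: "\<bar>t - mu\<bar> = (1-2*\<alpha>) * SS X t" for t
    proof -
      have "SS X t \<le> SS X mu + \<bar>t - mu\<bar>" by (rule SS_lip[OF assms(3)])
      then have "\<bar>t - mu\<bar> \<le> (1-2*\<alpha>) * (SS X mu + \<bar>t - mu\<bar>)" unfolding ht using c0
        by (intro mult_left_mono) auto
      then have "(2*\<alpha>) * \<bar>t - mu\<bar> \<le> (1-2*\<alpha>)*SS X mu" by (simp add: algebra_simps)
      then show ?thesis using a0 by (simp add: pos_le_divide_eq mult.commute)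
    qed
    have "\<bar>ep - mu\<bar> = (1-2*\<alpha>) * SS X ep" using hp[symmetric] c0 Sp by (simp add: abs_mult)
    note b1 = bnd[OF this]
    have "\<bar>em - mu\<bar> = (1-2*\<alpha>) * SS X em" using hm[symmetric] c0 Sm by (simp add: abs_mult)
    note b2 = bnd[OF this]
    show ?thesis using g1 g2 b1 b2 unfolding ep_def em_def by simp
  qed
  have r0: "((\<lambda>\<alpha>. (1-2*\<alpha>)*SS X mu/(2*\<alpha>)) \<longlongrightarrow> 0) (at_left (1/2::real))"
  proof -
    have "((\<lambda>\<alpha>. (1-2*\<alpha>)*SS X mu/(2*\<alpha>)) \<longlongrightarrow> (1-2*(1/2))*SS X mu/(2*(1/2))) (at_left (1/2::real))"
      by (intro tendsto_intros) auto
    then show ?thesis by simp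
  qed
  have cG: "isCont G mu" unfolding G_def using DERIV_isCont[OF assms(6)] by (intro continuous_intros) auto
  have lp: "((\<lambda>\<alpha>. expectile M X (1-\<alpha>)) \<longlongrightarrow> mu) (at_left (1/2::real))"
  proof -
    have "((\<lambda>\<alpha>. expectile M X (1-\<alpha>) - mu) \<longlongrightarrow> 0) (at_left (1/2::real))"
      by (rule Lim_null_comparison[OF _ r0]) (use ev key in \<open>auto elim!: eventually_mono\<close>)
    then show ?thesis by (simp add: LIM_zero_cancel)
  qed
  have lm: "((\<lambda>\<alpha>. expectile M X \<alpha>) \<longlongrightarrow> mu) (at_left (1/2::real))"
  proof -
    have "((\<lambda>\<alpha>. expectile M X \<alpha> - mu) \<longlongrightarrow> 0) (at_left (1/2::real))"
      by (rule Lim_null_comparison[OF _ r0]) (use ev key in \<open>auto elim!: eventually_mono\<close>)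
    then show ?thesis by (simp add: LIM_zero_cancel)
  qed
  have "((\<lambda>\<alpha>. expectile_skew2 M X \<alpha>) \<longlongrightarrow> G mu) (at_left (1/2))"
  proof (rule tendsto_sandwich)
    show "\<forall>\<^sub>F \<alpha> in at_left (1/2). G (expectile M X \<alpha>) \<le> expectile_skew2 M X \<alpha>"
      using ev key by (auto elim!: eventually_mono)
    show "\<forall>\<^sub>F \<alpha> in at_left (1/2). expectile_skew2 M X \<alpha> \<le> G (expectile M X (1-\<alpha>))"
      using ev key by (auto elim!: eventually_mono)
    show "((\<lambda>\<alpha>. G (expectile M X \<alpha>)) \<longlongrightarrow> G mu) (at_left (1/2))"
      by (rule isCont_tendsto_compose[OF cG lm])
    show "((\<lambda>\<alpha>. G (expectile M X (1-\<alpha>))) \<longlongrightarrow> G mu) (at_left (1/2))"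
      by (rule isCont_tendsto_compose[OF cG lp])
  qed
  then show ?thesis unfolding G_def mu_def .
qed

end
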